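(* Let $F$ be a continuous, strictly increasing CDF on $[0,1]$ and $v\in[0,1]$, and suppose Assumption 2 holds with constants $\Delta>0$, $0<c_f<C_f$, $\lambda>0$. Let $W_{v,F}(q)=U_{v,F}(F^{-1}(q))$ and $q^*_{v,F}=F(b^*_{v,F})$. Then for every $q\in[q^*_{v,F},\,q^*_{v,F}+C_f\Delta]$ (with $F^{-1}(q)\in[b^*_{v,F},b^*_{v,F}+\Delta]$), $$W_{v,F}(q^*_{v,F})-W_{v,F}(q)\ \le\ \frac{\lambda}{c_f}\,(q^*_{v,F}-q)^2.$$
   Context: $U_{v,F}(b)=(v-b)F(b)$, $b^*_{v,F}=\max\{\operatorname{argmax}_{b\in[0,1]}U_{v,F}(b)\}$. Assumption 2 (constants $\Delta>0$, $c_f,C_f,\lambda$): $F$ admits a density $f$ with $c_f<f(b)<C_f$ for all $b\in[b^*_{v,F}-\Delta,b^*_{v,F}+\Delta]$, and $\phi_F:b\mapsto b+F(b)/f(b)$ is differentiable with $\phi_F'(b)\le\lambda$ on $[b^*_{v,F},b^*_{v,F}+\Delta]$. *)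

theory Defs
  imports "HOL-Analysis.Analysis"
begin

definition U :: "real \<Rightarrow> (real \<Rightarrow> real) \<Rightarrow> real \<Rightarrow> real" where
  "U v F b = (v - b) * F b"

definition bstar :: "real \<Rightarrow> (real \<Rightarrow> real) \<Rightarrow> real" where
  "bstar v F = Sup {b \<in> {0..1}. \<forall>b'\<in>{0..1}. U v F b' \<le> U v F b}"

definition Finv :: "(real \<Rightarrow> real) \<Rightarrow> real \<Rightarrow> real" where
  "Finv F q = the_inv_into {0..1} F q"

definition W :: "real \<Rightarrow> (real \<Rightarrow> real) \<Rightarrow> real \<Rightarrow> real" where
  "W v F q = U v F (Finv F q)"

definition qstar :: "real \<Rightarrow> (real \<Rightarrow> real) \<Rightarrow> real" where
  "qstar v F = F (bstar v F)"

end

theory Submission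
  imports Defs
begin

theorem lemma6:
  fixes F f :: "real \<Rightarrow> real" and v \<Delta> c_f C_f lam q :: real
  assumes cont: "continuous_on {0..1} F"
    and smono: "strict_mono_on {0..1} F"
    and F0: "F 0 = 0" and F1: "F 1 = 1"
    and v: "v \<in> {0..1}"
    and pos: "\<Delta> > 0" "0 < c_f" "c_f < C_f" "lam > 0"
    and dens: "\<forall>b \<in> {bstar v F - \<Delta> .. bstar v F + \<Delta>} \<inter> {0..1}.
                 (F has_real_derivative f b) (at b within {0..1}) \<and> c_f < f b \<and> f b < C_f"
    and phi: "\<forall>b \<in> {bstar v F .. bstar v F + \<Delta>} \<inter> {0..1}.
                 \<exists>d. ((\<lambda>x. x + F x / f x) has_real_derivative d) (at b within {0..1}) \<and> d \<le> lam"
    and q: "q \<in> {qstar v F .. qstar v F + C_f * \<Delta>}" "q \<in> {0..1}"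
    and qinv: "Finv F q \<in> {bstar v F .. bstar v F + \<Delta>}"
  shows "W v F (qstar v F) - W v F q \<le> lam / c_f * (qstar v F - q)^2"
proof -
  define bs where "bs = bstar v F"
  define S where "S = {b \<in> {0..1::real}. \<forall>b'\<in>{0..1}. U v F b' \<le> U v F b}"
  have contU: "continuous_on {0..1} (U v F)"
    unfolding U_def by (intro continuous_intros cont)
  obtain m where m: "m \<in> {0..1::real}" "\<forall>y\<in>{0..1}. U v F y \<le> U v F m"
    using continuous_attains_sup[OF compact_Icc _ contU] by auto
  have S_eq: "S = {x \<in> {0..1}. U v F x = U v F m}"
    unfolding S_def using m by (auto intro: order.antisym)
  have "closed S" unfolding S_eq
    by (rule continuous_closed_preimage_constant[OF contU closed_atLeastAtMost])
  moreover have "S \<noteq> {}" using m S_def by auto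
  moreover have "bdd_above S" unfolding S_def by (rule bdd_aboveI[of _ 1]) auto
  ultimately have "Sup S \<in> S" by (rule closed_contains_Sup[rotated 2]) 
  hence bsS: "bs \<in> S" unfolding bs_def bstar_def S_def by simp
  hence bs01: "bs \<in> {0..1}" and bsmax: "\<And>y. y \<in> {0..1} \<Longrightarrow> U v F y \<le> U v F bs"
    unfolding S_def by auto
  have inj: "inj_on F {0..1}" using smono strict_mono_on_imp_inj_on by blast
  have "\<exists>x. 0 \<le> x \<and> x \<le> 1 \<and> F x = q"
    using IVT'[of F 0 q 1] q(2) F0 F1 cont by auto
  then obtain b0 where b0: "b0 \<in> {0..1}" "F b0 = q" by auto
  define b where "b = Finv F q"
  have bq: "b = b0" unfolding b_def Finv_def using b0 inj by (metis the_inv_into_f_f)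
  have Fb: "F b = q" and b01: "b \<in> {0..1}" using bq b0 by auto
  have Wq: "W v F q = U v F b" unfolding W_def b_def by simp
  have Wqs: "W v F (qstar v F) = U v F bs"
    unfolding W_def qstar_def Finv_def bs_def[symmetric]
    using the_inv_into_f_f[OF inj bs01] by simp
  have qs: "qstar v F = F bs" unfolding qstar_def bs_def by simp
  have bb: "bs \<le> b" "b \<le> bs + \<Delta>" using qinv unfolding b_def bs_def by auto
  have dens': "\<And>x. x \<in> {bs..b} \<Longrightarrow> (F has_real_derivative f x) (at x within {0..1}) \<and> c_f < f x \<and> f x < C_f"
    using dens bb b01 bs01 unfolding bs_def by auto
  obtain D where D: "\<And>x. x \<in> {bs..b} \<Longrightarrow> ((\<lambda>x. x + F x / f x) has_real_derivative D x) (at x within {0..1}) \<and> D x \<le> lam"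
  proof -
    have "\<forall>x\<in>{bs..b}. \<exists>d. ((\<lambda>x. x + F x / f x) has_real_derivative d) (at x within {0..1}) \<and> d \<le> lam"
      using phi bb b01 bs01 unfolding bs_def by auto
    then show ?thesis using that by metis
  qed
  have sub: "\<And>x. x \<in> {bs..b} \<Longrightarrow> {bs..x} \<subseteq> {0..1}" using bs01 b01 by auto
  show ?thesis
  proof (cases "bs = b")
    case True
    then show ?thesis using Wq Wqs pos by simp
  next
    case False
    hence lt: "bs < b" using bb by simp
    hence bs1: "bs < 1" using b01 by simp
    have fpos: "f bs > 0" using dens'[of bs] lt pos by auto
    have phibs: "bs + F bs / f bs = v"
    proof (cases "bs = 0")
      case True
      have "v \<le> 0"
      proof (rule ccontr)
        assume "\<not> v \<le> 0"
        hence "U v F (v/2) \<le> U v F 0" using bsmax[of "v/2"] v True by auto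
        moreover have "F (v/2) > F 0" using smono \<open>\<not> v \<le> 0\<close> v
          by (auto simp: strict_mono_on_def)
        ultimately show False using \<open>\<not> v \<le> 0\<close> F0 unfolding U_def
          by (simp add: mult_pos_pos) (smt (verit) mult_pos_pos)
      qed
      then show ?thesis using True v F0 by simp
    next
      case False
      hence int: "bs \<in> interior {0..1}" using bs01 bs1 by auto
      have dF: "(F has_real_derivative f bs) (at bs)"
        using dens'[of bs] lt at_within_interior[OF int] by auto
      have dU: "(U v F has_real_derivative (- F bs + (v - bs) * f bs)) (at bs)"
        unfolding U_def by (auto intro!: derivative_eq_intros dF)
      have "- F bs + (v - bs) * f bs = 0"
      proof (rule DERIV_local_max[OF dU, of "min bs (1 - bs)"])
        show "0 < min bs (1 - bs)" using False bs01 bs1 by auto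
        show "\<forall>y. \<bar>bs - y\<bar> < min bs (1 - bs) \<longrightarrow> U v F y \<le> U v F bs"
          using bsmax by (auto simp: abs_less_iff)
      qed
      then show ?thesis using fpos by (simp add: field_simps)
    qed
    have phibound: "x + F x / f x - v \<le> lam * (x - bs)" if x: "x \<in> {bs..b}" for x
    proof -
      have "\<exists>y\<in>{bs..x}. (x + F x / f x) - (bs + F bs / f bs) = (\<lambda>h. D y * h) (x - bs)"
        apply (rule mvt_very_simple)
        using x apply simp
        subgoal for y
          using has_field_derivative_subset[OF _ sub[OF x], of "\<lambda>x. x + F x / f x" "D y" y] D[of y] x
          by (auto simp: has_field_derivative_def)
        done
      then obtain y where y: "y \<in> {bs..x}" "(x + F x / f x) - (bs + F bs / f bs) = (x - bs) * D y"
        by auto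
      have "D y \<le> lam" using D[of y] y x by auto
      hence "(x - bs) * D y \<le> (x - bs) * lam" using y by (intro mult_left_mono) auto
      then show ?thesis using y phibs by (simp add: algebra_simps)
    qed
    have Fbound: "F x - F bs \<ge> c_f * (x - bs)" if x: "x \<in> {bs..b}" for x
    proof -
      have "\<exists>y\<in>{bs..x}. F x - F bs = (\<lambda>h. f y * h) (x - bs)"
        apply (rule mvt_very_simple)
        using x apply simp
        subgoal for y
          using has_field_derivative_subset[OF _ sub[OF x], of F "f y" y] dens'[of y] x
          by (auto simp: has_field_derivative_def)
        done
      then obtain y where y: "y \<in> {bs..x}" "F x - F bs = f y * (x - bs)" by auto
      have "c_f \<le> f y" using dens'[of y] y x by auto
      hence "(x - bs) * c_f \<le> (x - bs) * f y" using y by (intro mult_left_mono) auto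
      then show ?thesis using y by (simp add: algebra_simps)
    qed
    define h where "h = (\<lambda>x. U v F bs - U v F x - lam / c_f * (F x - F bs)^2)"
    define H where "H = (\<lambda>x. f x * (x + F x / f x - v) - 2 * (lam / c_f) * (F x - F bs) * f x)"
    have dh: "(h has_real_derivative H x) (at x within {bs..b})" if x: "x \<in> {bs..b}" for x
    proof -
      have dF: "(F has_real_derivative f x) (at x within {bs..b})"
        using dens'[OF x] has_field_derivative_subset[of F "f x" x "{0..1}" "{bs..b}"] bs01 b01 by auto
      have fx: "f x > 0" using dens'[OF x] pos by auto
      have "(h has_real_derivative (- (- F x + (v - x) * f x) - lam / c_f * (2 * (F x - F bs) * f x))) (at x within {bs..b})"
        unfolding h_def U_def using pos by (auto intro!: derivative_eq_intros dF)
      moreover have "- (- F x + (v - x) * f x) - lam / c_f * (2 * (F x - F bs) * f x) = H x"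
        unfolding H_def using fx by (simp add: field_simps)
      ultimately show ?thesis by simp
    qed
    have Hneg: "H x \<le> 0" if x: "x \<in> {bs..b}" for x
    proof -
      have fx: "f x > 0" using dens'[OF x] pos by auto
      have a: "x + F x / f x - v \<le> lam * (x - bs)" by (rule phibound[OF x])
      have "lam / c_f * (c_f * (x - bs)) \<le> lam / c_f * (F x - F bs)"
        using Fbound[OF x] pos by (intro mult_left_mono) auto
      hence c: "lam * (x - bs) \<le> lam / c_f * (F x - F bs)" using pos by simp
      have "lam * (x - bs) \<ge> 0" using x pos by auto
      hence "x + F x / f x - v - 2 * (lam / c_f) * (F x - F bs) \<le> 0" using a c by linarith
      hence "f x * (x + F x / f x - v - 2 * (lam / c_f) * (F x - F bs)) \<le> 0"
        using fx by (simp add: mult_nonneg_nonpos)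
      then show ?thesis unfolding H_def by (simp add: algebra_simps)
    qed
    have "\<exists>y\<in>{bs..b}. h b - h bs = (\<lambda>t. H y * t) (b - bs)"
      apply (rule mvt_very_simple)
      using lt apply simp
      using dh by (auto simp: has_field_derivative_def)
    then obtain y where y: "y \<in> {bs..b}" "h b - h bs = H y * (b - bs)" by auto
    have "H y * (b - bs) \<le> 0" using Hneg[OF y(1)] lt by (simp add: mult_nonpos_nonneg)
    hence "h b \<le> 0" using y unfolding h_def by simp
    then show ?thesis unfolding h_def using Wq Wqs qs Fb
      by (simp add: power2_commute)
  qed
qed

end
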